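(* Let $G = (\mathbb{Z}/2\mathbb{Z})^n$, $N = 2^n$, let $\epsilon \in (0,\tfrac12)$ and let $A \subseteq G$. Then there is a subgroup $H \leq G$ of index $|G/H| \leq W(\epsilon^{-3})$ which is $\epsilon$-regular for $A$.
   Context: For a subgroup $H \leq G$ and $g \in G$, let $A_H^{+g} \subseteq H$ be the set $\{x \in H : x + g \in A\}$. An element $g \in G$ is an $\epsilon$-regular value (with respect to $A$ and $H$) if for every nontrivial character $\chi$ of $H$ one has $\left|\sum_{x \in H} A_H^{+g}(x)\chi(x)\right| \leq \epsilon|H|$ (here $A_H^{+g}$ also denotes its indicator function on $H$). $H$ is $\epsilon$-regular for $A$ if the number of $g \in G$ which are not $\epsilon$-regular values is at most $\epsilon N$. $W(t)$ denotes a tower of twos of height $\lceil t\rceil$ ($W(t) = w_{\lceil t \rceil}$ with $w_0 = 1$, $w_{h+1} = 2^{w_h}$). *)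

theory Defs
  imports Complex_Main
begin

text \<open>The group G = (Z/2Z)^n, realised as functions nat => bool vanishing (False) outside {0..<n},
  with addition = pointwise exclusive or.\<close>

definition cube :: "nat \<Rightarrow> (nat \<Rightarrow> bool) set" where
  "cube n = {x. \<forall>i\<ge>n. \<not> x i}"

definition vadd :: "(nat \<Rightarrow> bool) \<Rightarrow> (nat \<Rightarrow> bool) \<Rightarrow> (nat \<Rightarrow> bool)" where
  "vadd x y = (\<lambda>i. x i \<noteq> y i)"

definition vzero :: "nat \<Rightarrow> bool" where
  "vzero = (\<lambda>_. False)"

text \<open>H is a subgroup of G (in characteristic 2, closure under addition plus 0 suffices).\<close>
definition is_subgroup :: "nat \<Rightarrow> (nat \<Rightarrow> bool) set \<Rightarrow> bool" where
  "is_subgroup n H \<longleftrightarrow> H \<subseteq> cube n \<and> vzero \<in> H \<and> (\<forall>x\<in>H. \<forall>y\<in>H. vadd x y \<in> H)"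

definition sg_index :: "nat \<Rightarrow> (nat \<Rightarrow> bool) set \<Rightarrow> real" where
  "sg_index n H = real (card (cube n)) / real (card H)"

text \<open>A character of H: a homomorphism from H to the unit circle (values off H are irrelevant).\<close>
definition is_character :: "(nat \<Rightarrow> bool) set \<Rightarrow> ((nat \<Rightarrow> bool) \<Rightarrow> complex) \<Rightarrow> bool" where
  "is_character H \<chi> \<longleftrightarrow> (\<forall>x\<in>H. cmod (\<chi> x) = 1) \<and>
     (\<forall>x\<in>H. \<forall>y\<in>H. \<chi> (vadd x y) = \<chi> x * \<chi> y)"

definition nontrivial_character :: "(nat \<Rightarrow> bool) set \<Rightarrow> ((nat \<Rightarrow> bool) \<Rightarrow> complex) \<Rightarrow> bool" where
  "nontrivial_character H \<chi> \<longleftrightarrow> is_character H \<chi> \<and> (\<exists>x\<in>H. \<chi> x \<noteq> 1)"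

definition shift_part :: "(nat \<Rightarrow> bool) set \<Rightarrow> (nat \<Rightarrow> bool) set \<Rightarrow> (nat \<Rightarrow> bool) \<Rightarrow> (nat \<Rightarrow> bool) set" where
  "shift_part A H g = {x\<in>H. vadd x g \<in> A}"

definition regular_value ::
  "real \<Rightarrow> (nat \<Rightarrow> bool) set \<Rightarrow> (nat \<Rightarrow> bool) set \<Rightarrow> (nat \<Rightarrow> bool) \<Rightarrow> bool" where
  "regular_value \<epsilon> A H g \<longleftrightarrow>
     (\<forall>\<chi>. nontrivial_character H \<chi> \<longrightarrow>
        cmod (\<Sum>x\<in>H. (if x \<in> shift_part A H g then 1 else 0) * \<chi> x) \<le> \<epsilon> * real (card H))"

definition eps_regular :: "nat \<Rightarrow> real \<Rightarrow> (nat \<Rightarrow> bool) set \<Rightarrow> (nat \<Rightarrow> bool) set \<Rightarrow> bool" where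
  "eps_regular n \<epsilon> A H \<longleftrightarrow>
     real (card {g\<in>cube n. \<not> regular_value \<epsilon> A H g}) \<le> \<epsilon> * 2 ^ n"

fun tower :: "nat \<Rightarrow> nat" where
  "tower 0 = 1"
| "tower (Suc h) = 2 ^ tower h"

definition W :: "real \<Rightarrow> nat" where
  "W t = tower (nat \<lceil>t\<rceil>)"

end

theory Submission
  imports Defs
begin

lemma vadd_comm: "vadd x y = vadd y x"
  by (auto simp: vadd_def fun_eq_iff)
lemma vadd_assoc: "vadd (vadd x y) z = vadd x (vadd y z)"
  by (auto simp: vadd_def fun_eq_iff)
lemma vadd_self: "vadd x x = vzero"
  by (auto simp: vadd_def vzero_def fun_eq_iff)
lemma vadd_zero[simp]: "vadd x vzero = x" "vadd vzero x = x"
  by (auto simp: vadd_def vzero_def fun_eq_iff)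
lemma vadd_cancel[simp]: "vadd (vadd x y) y = x" "vadd y (vadd y x) = x"
  by (auto simp: vadd_def fun_eq_iff)
lemma vadd_cube: "x \<in> cube n \<Longrightarrow> y \<in> cube n \<Longrightarrow> vadd x y \<in> cube n"
  by (auto simp: vadd_def cube_def)
lemma vadd_inj: "vadd x y = vadd z y \<longleftrightarrow> x = z"
  by (auto simp: vadd_def fun_eq_iff)

lemma cube_eq: "cube n = (\<lambda>S i. i \<in> S) ` Pow {..<n}"
proof -
  have "x \<in> (\<lambda>S i. i \<in> S) ` Pow {..<n}" if "x \<in> cube n" for x
  proof
    show "x = (\<lambda>i. i \<in> {i. x i})" by auto
    show "{i. x i} \<in> Pow {..<n}" using that by (auto simp: cube_def not_less[symmetric])
  qed
  then show ?thesis by (auto simp: cube_def)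
qed

lemma card_cube: "card (cube n) = 2 ^ n"
proof -
  have "inj_on (\<lambda>S i. i \<in> S) (Pow {..<(n::nat)})"
    by (auto simp: inj_on_def fun_eq_iff)
  then show ?thesis unfolding cube_eq by (simp add: card_image card_Pow)
qed

lemma finite_cube[simp]: "finite (cube n)"
  unfolding cube_eq by simp

lemma sub_finite: "is_subgroup n H \<Longrightarrow> finite H"
  unfolding is_subgroup_def using finite_subset finite_cube by blast

lemma sub_card_pos: "is_subgroup n H \<Longrightarrow> card H > 0"
  using sub_finite[of n H] unfolding is_subgroup_def by (auto simp: card_gt_0_iff)

lemma sum_shift:
  assumes "\<forall>x\<in>S. vadd x y \<in> S"
  shows "(\<Sum>x\<in>S. f (vadd x y)) = (\<Sum>x\<in>S. f x)"
  by (rule sum.reindex_bij_witness[where i="\<lambda>x. vadd x y" and j="\<lambda>x. vadd x y"])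
     (use assms in auto)

lemma cs_sum:
  fixes f :: "'a \<Rightarrow> real"
  assumes "finite S"
  shows "(\<Sum>x\<in>S. f x)\<^sup>2 \<le> real (card S) * (\<Sum>x\<in>S. (f x)\<^sup>2)"
proof (cases "card S = 0")
  case True then show ?thesis using assms by simp
next
  case False
  define c where "c = real (card S)"
  define s where "s = (\<Sum>x\<in>S. f x)"
  have cpos: "c > 0" using False c_def by simp
  have "0 \<le> (\<Sum>x\<in>S. (c * f x - s)\<^sup>2)" by (rule sum_nonneg) simp
  also have "\<dots> = (\<Sum>x\<in>S. c\<^sup>2 * (f x)\<^sup>2 - 2 * c * s * f x + s\<^sup>2)"
    by (rule sum.cong) (auto simp: power2_eq_square algebra_simps)
  also have "\<dots> = c\<^sup>2 * (\<Sum>x\<in>S. (f x)\<^sup>2) - 2 * c * s * s + c * s\<^sup>2"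
    by (simp add: sum.distrib sum_subtractf sum_distrib_left[symmetric] s_def c_def)
  also have "\<dots> = c * (c * (\<Sum>x\<in>S. (f x)\<^sup>2) - s\<^sup>2)"
    by (simp add: power2_eq_square algebra_simps)
  finally have "0 \<le> c * (\<Sum>x\<in>S. (f x)\<^sup>2) - s\<^sup>2"
    using cpos by (simp add: zero_le_mult_iff)
  then show ?thesis by (simp add: s_def c_def)
qed

definition coset :: "(nat \<Rightarrow> bool) set \<Rightarrow> (nat \<Rightarrow> bool) \<Rightarrow> (nat \<Rightarrow> bool) set" where
  "coset H g = (\<lambda>h. vadd g h) ` H"

definition ncos :: "nat \<Rightarrow> (nat \<Rightarrow> bool) set \<Rightarrow> nat" where
  "ncos n H = card (coset H ` cube n)"

lemma coset_self: "is_subgroup n H \<Longrightarrow> g \<in> coset H g"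
  unfolding coset_def is_subgroup_def by (metis image_eqI vadd_zero(1))

lemma coset_mem: "g' \<in> coset H g \<longleftrightarrow> (\<exists>h\<in>H. g' = vadd g h)"
  unfolding coset_def by auto

lemma coset_back: "g' \<in> coset H g \<Longrightarrow> \<exists>h\<in>H. g = vadd g' h"
  unfolding coset_mem by (metis vadd_assoc vadd_cancel(2) vadd_comm)

lemma coset_eq:
  assumes sg: "is_subgroup n H" and m: "g' \<in> coset H g"
  shows "coset H g' = coset H g"
proof -
  obtain h where h: "h \<in> H" "g' = vadd g h" using m coset_mem by blast
  have cl: "\<forall>x\<in>H. \<forall>y\<in>H. vadd x y \<in> H" using sg unfolding is_subgroup_def by blast
  show ?thesis
  proof
    show "coset H g' \<subseteq> coset H g"
    proof
      fix z assume "z \<in> coset H g'"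
      then obtain k where k: "k \<in> H" "z = vadd g' k" using coset_mem by blast
      have "z = vadd g (vadd h k)" using h k by (simp add: vadd_assoc)
      then show "z \<in> coset H g" using cl h k coset_mem by blast
    qed
  next
    show "coset H g \<subseteq> coset H g'"
    proof
      fix z assume "z \<in> coset H g"
      then obtain k where k: "k \<in> H" "z = vadd g k" using coset_mem by blast
      have "z = vadd g' (vadd h k)" using h k
        by (metis vadd_assoc vadd_cancel(2))
      then show "z \<in> coset H g'" using cl h k coset_mem by blast
    qed
  qed
qed

lemma coset_sub: "is_subgroup n H \<Longrightarrow> g \<in> cube n \<Longrightarrow> coset H g \<subseteq> cube n"
  unfolding coset_def is_subgroup_def using vadd_cube by blast

lemma card_coset: "card (coset H g) = card H"
  unfolding coset_def
  by (rule card_image) (auto simp: inj_on_def vadd_comm[of g] vadd_inj)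

lemma card_cube_ncos:
  assumes sg: "is_subgroup n H"
  shows "card (cube n) = ncos n H * card H"
proof -
  have U: "\<Union>(coset H ` cube n) = cube n"
    using coset_sub[OF sg] coset_self[OF sg] by blast
  have "card H * card (coset H ` cube n) = card (\<Union>(coset H ` cube n))"
  proof (rule card_partition)
    show "finite (coset H ` cube n)" by simp
    show "finite (\<Union>(coset H ` cube n))" using U by simp
    show "card c = card H" if "c \<in> coset H ` cube n" for c using card_coset that by blast
    show "c1 \<inter> c2 = {}" if "c1\<in>coset H ` cube n" "c2\<in>coset H ` cube n" "c1 \<noteq> c2" for c1 c2
      using that coset_eq[OF sg] by (smt (verit) IntE Int_emptyI imageE)
  qed
  then show ?thesis using U by (simp add: ncos_def mult.commute)
qed

lemma char_zero:
  assumes "is_character H \<chi>" "vzero \<in> H"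
  shows "\<chi> vzero = 1"
proof -
  have "\<chi> vzero = \<chi> vzero * \<chi> vzero" using assms unfolding is_character_def
    by (metis vadd_zero(1))
  moreover have "\<chi> vzero \<noteq> 0" using assms unfolding is_character_def by force
  ultimately show ?thesis by (metis mult_cancel_left2)
qed

lemma char_pm:
  assumes "is_character H \<chi>" "is_subgroup n H" "x \<in> H"
  shows "\<chi> x = 1 \<or> \<chi> x = -1"
proof -
  have "\<chi> x * \<chi> x = \<chi> (vadd x x)" using assms unfolding is_character_def by metis
  also have "\<dots> = 1" using char_zero[OF assms(1)] assms(2) by (simp add: vadd_self is_subgroup_def)
  finally show ?thesis using square_eq_1_iff by blast
qed

definition cnt :: "(nat \<Rightarrow> bool) set \<Rightarrow> (nat \<Rightarrow> bool) set \<Rightarrow> (nat \<Rightarrow> bool) \<Rightarrow> real" where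
  "cnt A S g = (\<Sum>x\<in>S. of_bool (vadd x g \<in> A))"

definition dens :: "(nat \<Rightarrow> bool) set \<Rightarrow> (nat \<Rightarrow> bool) set \<Rightarrow> (nat \<Rightarrow> bool) \<Rightarrow> real" where
  "dens A H g = cnt A H g / real (card H)"

definition chs where
  "chs A H g \<chi> = (\<Sum>x\<in>H. (if x \<in> shift_part A H g then 1 else 0) * \<chi> x)"

lemma kernel_props:
  assumes sg: "is_subgroup n H" and nt: "nontrivial_character H \<chi>"
  defines "K \<equiv> {x\<in>H. \<chi> x = 1}"
  shows "is_subgroup n K" "K \<subseteq> H" "\<forall>x\<in>H-K. \<forall>y\<in>H-K. vadd x y \<in> K"
    "\<forall>x\<in>H-K. \<forall>y\<in>K. vadd x y \<in> H-K" "card K = card (H-K)"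
    "chs A H g \<chi> = complex_of_real (cnt A K g - cnt A (H-K) g)"
proof -
  have ch: "is_character H \<chi>" using nt unfolding nontrivial_character_def by blast
  have cl: "\<forall>x\<in>H. \<forall>y\<in>H. vadd x y \<in> H" and z: "vzero \<in> H" and Hc: "H \<subseteq> cube n"
    using sg is_subgroup_def by auto
  have mul: "\<chi> (vadd x y) = \<chi> x * \<chi> y" if "x \<in> H" "y \<in> H" for x y
    using ch that unfolding is_character_def by blast
  have pm: "\<chi> x = 1 \<or> \<chi> x = -1" if "x \<in> H" for x using char_pm[OF ch sg that] .
  have m1: "x \<in> H - K \<Longrightarrow> \<chi> x = -1" for x using pm unfolding K_def by auto
  show "K \<subseteq> H" unfolding K_def by auto
  show "is_subgroup n K" unfolding is_subgroup_def K_def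
    using cl z Hc char_zero[OF ch z] mul by auto
  show HK: "\<forall>x\<in>H-K. \<forall>y\<in>H-K. vadd x y \<in> K"
  proof (intro ballI)
    fix x y assume xy: "x \<in> H-K" "y \<in> H-K"
    have xH: "x \<in> H" "y \<in> H" using xy by blast+
    have a: "\<chi> x = -1" by (rule m1[OF xy(1)])
    have b: "\<chi> y = -1" by (rule m1[OF xy(2)])
    have "\<chi> (vadd x y) = 1" using mul[OF xH] a b by simp
    moreover have "vadd x y \<in> H" using cl xH by blast
    ultimately show "vadd x y \<in> K" unfolding K_def by blast
  qed
  show HKK: "\<forall>x\<in>H-K. \<forall>y\<in>K. vadd x y \<in> H-K"
  proof (intro ballI)
    fix x y assume xy: "x \<in> H-K" "y \<in> K"
    have xH: "x \<in> H" "y \<in> H" using xy unfolding K_def by blast+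
    have a: "\<chi> x = -1" by (rule m1[OF xy(1)])
    have b: "\<chi> y = 1" using xy(2) unfolding K_def by blast
    have "\<chi> (vadd x y) = -1" using mul[OF xH] a b by simp
    moreover have "vadd x y \<in> H" using cl xH by blast
    ultimately show "vadd x y \<in> H-K" unfolding K_def by simp
  qed
  obtain h0 where h0: "h0 \<in> H" "\<chi> h0 \<noteq> 1" using nt unfolding nontrivial_character_def by blast
  have h0K: "h0 \<in> H - K" using h0 unfolding K_def by blast
  have "bij_betw (\<lambda>x. vadd x h0) K (H-K)"
  proof (rule bij_betw_byWitness[where f'="\<lambda>x. vadd x h0"])
    show "\<forall>a\<in>K. vadd (vadd a h0) h0 = a" by (intro ballI vadd_cancel)
    show "\<forall>a\<in>H-K. vadd (vadd a h0) h0 = a" by (intro ballI vadd_cancel)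
    show "(\<lambda>x. vadd x h0) ` K \<subseteq> H - K"
    proof
      fix z assume "z \<in> (\<lambda>x. vadd x h0) ` K"
      then obtain x where x: "x \<in> K" "z = vadd x h0" by blast
      have "vadd h0 x \<in> H - K" using HKK h0K x(1) by blast
      then show "z \<in> H - K" using x(2) vadd_comm by metis
    qed
    show "(\<lambda>x. vadd x h0) ` (H-K) \<subseteq> K"
      using HK h0K by blast
  qed
  then show "card K = card (H-K)" by (rule bij_betw_same_card)
  have fin: "finite H" using sub_finite[OF sg] .
  have KH: "K \<subseteq> H" unfolding K_def by blast
  define F where "F x = (if x \<in> shift_part A H g then 1 else 0) * \<chi> x" for x
  have "chs A H g \<chi> = sum F (H - K) + sum F K"
    unfolding chs_def F_def[symmetric] by (rule sum.subset_diff[OF KH fin])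
  also have "sum F K = complex_of_real (cnt A K g)"
    unfolding cnt_def of_real_sum
  proof (rule sum.cong)
    fix x assume "x \<in> K"
    then have "x \<in> H" "\<chi> x = 1" unfolding K_def by blast+
    then show "F x = complex_of_real (of_bool (vadd x g \<in> A))"
      unfolding F_def shift_part_def by simp
  qed simp
  also have "sum F (H - K) = - complex_of_real (cnt A (H-K) g)"
    unfolding cnt_def of_real_sum sum_negf[symmetric]
  proof (rule sum.cong)
    fix x assume x: "x \<in> H - K"
    then have "x \<in> H" "\<chi> x = -1" using m1[OF x] by blast+
    then show "F x = - complex_of_real (of_bool (vadd x g \<in> A))"
      unfolding F_def shift_part_def by simp
  qed simp
  finally show "chs A H g \<chi> = complex_of_real (cnt A K g - cnt A (H-K) g)" by simp
qed

lemma chs_shift: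
  assumes sg: "is_subgroup n H" and ch: "is_character H \<chi>" and h: "h \<in> H"
  shows "cmod (chs A H (vadd g h) \<chi>) = cmod (chs A H g \<chi>)"
proof -
  have cl: "\<forall>x\<in>H. \<forall>y\<in>H. vadd x y \<in> H" using sg is_subgroup_def by auto
  have mul: "\<chi> (vadd x y) = \<chi> x * \<chi> y" if "x \<in> H" "y \<in> H" for x y
    using ch that unfolding is_character_def by blast
  have e: "vadd (vadd x h) (vadd g h) = vadd x g" for x
    by (auto simp: vadd_def fun_eq_iff)
  have "chs A H (vadd g h) \<chi> = (\<Sum>x\<in>H. (if vadd x (vadd g h) \<in> A then 1 else 0) * \<chi> x)"
    unfolding chs_def by (rule sum.cong) (auto simp: shift_part_def)
  also have "\<dots> = (\<Sum>x\<in>H. (if vadd (vadd x h) (vadd g h) \<in> A then 1 else 0) * \<chi> (vadd x h))"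
    by (rule sum_shift[symmetric]) (use cl h in auto)
  also have "\<dots> = (\<Sum>x\<in>H. \<chi> h * ((if x \<in> shift_part A H g then 1 else 0) * \<chi> x))"
    by (rule sum.cong) (auto simp: e mul h shift_part_def)
  also have "\<dots> = \<chi> h * chs A H g \<chi>" unfolding chs_def by (simp add: sum_distrib_left)
  finally show ?thesis using ch h by (simp add: norm_mult is_character_def)
qed

lemma avg_lemma:
  assumes fin: "finite S" and fin': "finite H'" and cl: "\<forall>x\<in>S. \<forall>y\<in>H'. vadd x y \<in> S"
  shows "(\<Sum>x\<in>S. cnt A H' (vadd g x)) = real (card H') * cnt A S g"
proof -
  have e: "vadd y (vadd g x) = vadd (vadd x y) g" for x y
    by (auto simp: vadd_def fun_eq_iff)
  have "(\<Sum>x\<in>S. cnt A H' (vadd g x)) = (\<Sum>x\<in>S. \<Sum>y\<in>H'. of_bool (vadd (vadd x y) g \<in> A))"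
    unfolding cnt_def e ..
  also have "\<dots> = (\<Sum>y\<in>H'. \<Sum>x\<in>S. of_bool (vadd (vadd x y) g \<in> A))"
    by (rule sum.swap)
  also have "\<dots> = (\<Sum>y\<in>H'. \<Sum>x\<in>S. of_bool (vadd x g \<in> A))"
  proof (rule sum.cong)
    fix y assume "y \<in> H'"
    then show "(\<Sum>x\<in>S. of_bool (vadd (vadd x y) g \<in> A) :: real) = (\<Sum>x\<in>S. of_bool (vadd x g \<in> A))"
      using sum_shift[of S y "\<lambda>z. of_bool (vadd z g \<in> A) :: real"] cl by blast
  qed simp
  also have "\<dots> = real (card H') * cnt A S g" unfolding cnt_def by simp
  finally show ?thesis .
qed

lemma dens_sum:
  assumes sg': "is_subgroup n H'" and fin: "finite S" and cl: "\<forall>x\<in>S. \<forall>y\<in>H'. vadd x y \<in> S"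
  shows "(\<Sum>x\<in>S. dens A H' (vadd g x)) = cnt A S g"
proof -
  have p: "real (card H') > 0" using sub_card_pos[OF sg'] by simp
  have "(\<Sum>x\<in>S. dens A H' (vadd g x)) = (\<Sum>x\<in>S. cnt A H' (vadd g x)) / real (card H')"
    unfolding dens_def by (simp add: sum_divide_distrib)
  also have "\<dots> = cnt A S g"
    using avg_lemma[OF fin sub_finite[OF sg'] cl] p by simp
  finally show ?thesis .
qed

definition energy :: "nat \<Rightarrow> (nat \<Rightarrow> bool) set \<Rightarrow> (nat \<Rightarrow> bool) set \<Rightarrow> real" where
  "energy n A H = (\<Sum>g\<in>cube n. (dens A H g)\<^sup>2) / 2 ^ n"

lemma energy_identity:
  assumes sg: "is_subgroup n H"
  shows "(\<Sum>g\<in>cube n. (dens A H' g)\<^sup>2) = (\<Sum>g\<in>cube n. (\<Sum>x\<in>H. (dens A H' (vadd g x))\<^sup>2) / real (card H))"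
proof -
  have p: "real (card H) > 0" using sub_card_pos[OF sg] by simp
  have Hc: "H \<subseteq> cube n" using sg unfolding is_subgroup_def by blast
  have "(\<Sum>g\<in>cube n. (\<Sum>x\<in>H. (dens A H' (vadd g x))\<^sup>2) / real (card H))
      = (\<Sum>x\<in>H. \<Sum>g\<in>cube n. (dens A H' (vadd g x))\<^sup>2) / real (card H)"
    unfolding sum_divide_distrib[symmetric] by (rule arg_cong[where f="\<lambda>t. t / real (card H)"], rule sum.swap)
  also have "\<dots> = (\<Sum>x\<in>H. \<Sum>g\<in>cube n. (dens A H' g)\<^sup>2) / real (card H)"
  proof -
    have "(\<Sum>g\<in>cube n. (dens A H' (vadd g x))\<^sup>2) = (\<Sum>g\<in>cube n. (dens A H' g)\<^sup>2)" if "x \<in> H" for x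
      using sum_shift[of "cube n" x "\<lambda>z. (dens A H' z)\<^sup>2"] vadd_cube Hc that by blast
    then show ?thesis by simp
  qed
  also have "\<dots> = (\<Sum>g\<in>cube n. (dens A H' g)\<^sup>2)" using p by simp
  finally show ?thesis by simp
qed

lemma var_nonneg:
  assumes sg: "is_subgroup n H" and sg': "is_subgroup n H'" and sub: "H' \<subseteq> H"
  shows "(dens A H g)\<^sup>2 \<le> (\<Sum>x\<in>H. (dens A H' (vadd g x))\<^sup>2) / real (card H)"
proof -
  have p: "real (card H) > 0" using sub_card_pos[OF sg] by simp
  have cl: "\<forall>x\<in>H. \<forall>y\<in>H'. vadd x y \<in> H" using sg sub unfolding is_subgroup_def by blast
  have s: "(\<Sum>x\<in>H. dens A H' (vadd g x)) = cnt A H g"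
    by (rule dens_sum[OF sg' sub_finite[OF sg] cl])
  have cs: "(cnt A H g)\<^sup>2 \<le> real (card H) * (\<Sum>x\<in>H. (dens A H' (vadd g x))\<^sup>2)"
    using cs_sum[OF sub_finite[OF sg], of "\<lambda>x. dens A H' (vadd g x)"] s by simp
  have "(dens A H g)\<^sup>2 = (cnt A H g)\<^sup>2 / (real (card H))\<^sup>2"
    unfolding dens_def by (simp add: power_divide)
  also have "\<dots> \<le> real (card H) * (\<Sum>x\<in>H. (dens A H' (vadd g x))\<^sup>2) / (real (card H))\<^sup>2"
    by (rule divide_right_mono[OF cs]) simp
  also have "\<dots> = (\<Sum>x\<in>H. (dens A H' (vadd g x))\<^sup>2) / real (card H)"
    using p by (simp add: power2_eq_square)
  finally show ?thesis .
qed

lemma var_big: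
  assumes sg: "is_subgroup n H" and nt: "nontrivial_character H \<chi>" and sg': "is_subgroup n H'"
    and sub: "H' \<subseteq> {x\<in>H. \<chi> x = 1}" and big: "cmod (chs A H g \<chi>) > \<epsilon> * real (card H)"
    and eps: "\<epsilon> > 0"
  shows "(\<Sum>x\<in>H. (dens A H' (vadd g x))\<^sup>2) / real (card H) - (dens A H g)\<^sup>2 > \<epsilon>\<^sup>2"
proof -
  define K where "K = {x\<in>H. \<chi> x = 1}"
  note kp = kernel_props[OF sg nt, folded K_def]
  define f where "f x = dens A H' (vadd g x)" for x
  define \<alpha> where "\<alpha> = cnt A K g"
  define \<beta> where "\<beta> = cnt A (H-K) g"
  define m where "m = real (card K)"
  define P where "P = (\<Sum>x\<in>K. (f x)\<^sup>2)"
  define Q where "Q = (\<Sum>x\<in>H-K. (f x)\<^sup>2)"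
  have fin: "finite H" by (rule sub_finite[OF sg])
  have KH: "K \<subseteq> H" by (rule kp(2))
  have finK: "finite K" using fin KH finite_subset by blast
  have finD: "finite (H - K)" using fin by simp
  have cardH: "card H = card K + card (H - K)"
  proof -
    have "card H = card (H \<inter> K) + card (H - K)" by (rule card_Int_Diff[OF fin])
    moreover have "H \<inter> K = K" using KH by blast
    ultimately show ?thesis by simp
  qed
  have cH: "real (card H) = 2 * m" using cardH kp(5) m_def by simp
  have mpos: "m > 0" using sub_card_pos[OF kp(1)] m_def by simp
  have subK: "H' \<subseteq> K" using sub K_def by simp
  have clK: "\<forall>x\<in>K. \<forall>y\<in>H'. vadd x y \<in> K" using kp(1) subK unfolding is_subgroup_def by blast
  have clD: "\<forall>x\<in>H-K. \<forall>y\<in>H'. vadd x y \<in> H-K" using kp(4) subK by blast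
  have sK: "(\<Sum>x\<in>K. f x) = \<alpha>" unfolding f_def \<alpha>_def by (rule dens_sum[OF sg' finK clK])
  have sD: "(\<Sum>x\<in>H-K. f x) = \<beta>" unfolding f_def \<beta>_def by (rule dens_sum[OF sg' finD clD])
  have PQ: "(\<Sum>x\<in>H. (f x)\<^sup>2) = Q + P" unfolding P_def Q_def by (rule sum.subset_diff[OF KH fin])
  have cntH: "cnt A H g = \<beta> + \<alpha>" unfolding cnt_def \<alpha>_def \<beta>_def by (rule sum.subset_diff[OF KH fin])
  have csK: "\<alpha>\<^sup>2 \<le> m * P" using cs_sum[OF finK, of f] sK unfolding P_def m_def by simp
  have csD: "\<beta>\<^sup>2 \<le> m * Q" using cs_sum[OF finD, of f] sD kp(5) unfolding Q_def m_def by simp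
  have "cmod (chs A H g \<chi>) = \<bar>\<alpha> - \<beta>\<bar>" by (simp only: kp(6) norm_of_real \<alpha>_def \<beta>_def)
  then have ab: "\<bar>\<alpha> - \<beta>\<bar> > 2 * m * \<epsilon>" using big cH by (simp add: mult.commute)
  have "(2 * m * \<epsilon>)\<^sup>2 < \<bar>\<alpha> - \<beta>\<bar>\<^sup>2"
    by (rule power_strict_mono[OF ab]) (use mpos eps in auto)
  then have sq: "4 * m\<^sup>2 * \<epsilon>\<^sup>2 < (\<alpha> - \<beta>)\<^sup>2" by (simp add: power_mult_distrib)
  have e1: "\<epsilon>\<^sup>2 < (\<alpha> - \<beta>)\<^sup>2 / (4 * m\<^sup>2)"
    using sq mpos by (simp add: field_simps)
  have e2: "(\<alpha> - \<beta>)\<^sup>2 / (4 * m\<^sup>2) = (\<alpha>\<^sup>2 + \<beta>\<^sup>2) / (2 * m\<^sup>2) - ((\<alpha> + \<beta>) / (2 * m))\<^sup>2"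
    using mpos by (simp add: field_simps power2_eq_square)
  have e3: "(\<alpha>\<^sup>2 + \<beta>\<^sup>2) / (2 * m\<^sup>2) \<le> (Q + P) / (2 * m)"
  proof -
    have "(\<alpha>\<^sup>2 + \<beta>\<^sup>2) / (2 * m\<^sup>2) \<le> (m * P + m * Q) / (2 * m\<^sup>2)"
      by (rule divide_right_mono) (use csK csD in auto)
    also have "\<dots> = (Q + P) / (2 * m)" using mpos by (simp add: field_simps power2_eq_square)
    finally show ?thesis .
  qed
  have dH: "dens A H g = (\<alpha> + \<beta>) / (2 * m)" unfolding dens_def using cntH cH by simp
  have "(\<Sum>x\<in>H. (dens A H' (vadd g x))\<^sup>2) / real (card H) = (Q + P) / (2 * m)"
    using PQ cH unfolding f_def by simp
  moreover have "(dens A H g)\<^sup>2 = ((\<alpha> + \<beta>) / (2 * m))\<^sup>2" using dH by simp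
  ultimately show ?thesis using e1 e2 e3 by linarith
qed

lemma sub_inter: "is_subgroup n A \<Longrightarrow> is_subgroup n B \<Longrightarrow> is_subgroup n (A \<inter> B)"
  unfolding is_subgroup_def by blast

lemma halving:
  assumes cl: "\<forall>x\<in>L. \<forall>y\<in>L. vadd x y \<in> L" and fin: "finite L" and LH: "L \<subseteq> H"
    and hk: "\<forall>x\<in>H-K. \<forall>y\<in>H-K. vadd x y \<in> K"
  shows "card L \<le> 2 * card (L \<inter> K)"
proof -
  have c: "card L = card (L \<inter> K) + card (L - K)" by (rule card_Int_Diff[OF fin])
  have "card (L - K) \<le> card (L \<inter> K)"
  proof (cases "L - K = {}")
    case True then show ?thesis by (metis card.empty le0)
  next
    case False
    then obtain y where y: "y \<in> L - K" by blast
    show ?thesis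
    proof (rule card_inj_on_le[where f="\<lambda>x. vadd x y"])
      show "inj_on (\<lambda>x. vadd x y) (L - K)" by (auto simp: inj_on_def vadd_inj)
      show "(\<lambda>x. vadd x y) ` (L - K) \<subseteq> L \<inter> K"
      proof
        fix z assume "z \<in> (\<lambda>x. vadd x y) ` (L - K)"
        then obtain x where x: "x \<in> L - K" "z = vadd x y" by blast
        have "x \<in> H - K" "y \<in> H - K" using x y LH by blast+
        then have "vadd x y \<in> K" using hk by blast
        moreover have "vadd x y \<in> L" using cl x y by blast
        ultimately show "z \<in> L \<inter> K" using x by blast
      qed
      show "finite (L \<inter> K)" using fin by simp
    qed
  qed
  then show ?thesis using c by simp
qed

lemma inter_lemma:
  assumes finX: "finite X" and sg: "is_subgroup n H"
    and hyp: "\<forall>K\<in>X. is_subgroup n K \<and> (\<forall>x\<in>H-K. \<forall>y\<in>H-K. vadd x y \<in> K)"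
  shows "is_subgroup n (H \<inter> \<Inter>X) \<and> card H \<le> 2 ^ card X * card (H \<inter> \<Inter>X)"
  using finX hyp
proof (induction X rule: finite_induct)
  case empty
  then show ?case using sg by simp
next
  case (insert K X)
  define L where "L = H \<inter> \<Inter>X"
  have IH: "is_subgroup n L" "card H \<le> 2 ^ card X * card L"
    using insert L_def by auto
  have K: "is_subgroup n K" "\<forall>x\<in>H-K. \<forall>y\<in>H-K. vadd x y \<in> K" using insert.prems by auto
  have eq: "H \<inter> \<Inter>(insert K X) = L \<inter> K" unfolding L_def by blast
  have "card L \<le> 2 * card (L \<inter> K)"
  proof (rule halving[OF _ sub_finite[OF IH(1)] _ K(2)])
    show "\<forall>x\<in>L. \<forall>y\<in>L. vadd x y \<in> L" using IH(1) unfolding is_subgroup_def by blast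
    show "L \<subseteq> H" unfolding L_def by blast
  qed
  then have "card H \<le> 2 ^ card X * (2 * card (L \<inter> K))"
    using IH(2) by (meson le_trans mult_le_mono2)
  then have "card H \<le> 2 ^ card (insert K X) * card (L \<inter> K)"
    using insert.hyps by simp
  moreover have "is_subgroup n (L \<inter> K)" by (rule sub_inter[OF IH(1) K(1)])
  ultimately show ?case using eq by simp
qed

lemma step:
  assumes sg: "is_subgroup n H" and eps: "0 < \<epsilon>" and nreg: "\<not> eps_regular n \<epsilon> A H"
  shows "\<exists>H'. is_subgroup n H' \<and> ncos n H' \<le> ncos n H * 2 ^ ncos n H
              \<and> energy n A H' > energy n A H + \<epsilon> ^ 3"
proof -
  define I where "I = {g\<in>cube n. \<not> regular_value \<epsilon> A H g}"
  have Icard: "real (card I) > \<epsilon> * 2 ^ n" using nreg unfolding eps_regular_def I_def by simp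
  have irr: "\<exists>\<chi>. nontrivial_character H \<chi> \<and> cmod (chs A H g \<chi>) > \<epsilon> * real (card H)"
    if "g \<in> I" for g
    using that unfolding I_def regular_value_def chs_def by (auto simp: not_le)
  define R where "R C = (SOME g. g \<in> C \<and> g \<in> I)" for C
  define ch where "ch C = (SOME \<chi>. nontrivial_character H \<chi> \<and> cmod (chs A H (R C) \<chi>) > \<epsilon> * real (card H))" for C
  define ker where "ker C = {x\<in>H. ch C x = 1}" for C
  define X where "X = (\<lambda>g. ker (coset H g)) ` I"
  define H' where "H' = H \<inter> \<Inter>X"
  have key: "nontrivial_character H (ch (coset H g)) \<and> cmod (chs A H g (ch (coset H g))) > \<epsilon> * real (card H)"
    if gI: "g \<in> I" for g
  proof -
    define C where "C = coset H g"
    have "\<exists>g'. g' \<in> C \<and> g' \<in> I" using coset_self[OF sg] gI C_def by blast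
    then have RC: "R C \<in> C \<and> R C \<in> I" unfolding R_def by (rule someI_ex)
    then obtain \<chi> where "nontrivial_character H \<chi> \<and> cmod (chs A H (R C) \<chi>) > \<epsilon> * real (card H)"
      using irr by blast
    then have chC: "nontrivial_character H (ch C) \<and> cmod (chs A H (R C) (ch C)) > \<epsilon> * real (card H)"
      unfolding ch_def
      using someI_ex[of "\<lambda>\<chi>. nontrivial_character H \<chi> \<and> cmod (chs A H (R C) \<chi>) > \<epsilon> * real (card H)"] by blast
    obtain h where h: "h \<in> H" "g = vadd (R C) h" using coset_back RC C_def by blast
    have "is_character H (ch C)" using chC unfolding nontrivial_character_def by blast
    then have "cmod (chs A H g (ch C)) = cmod (chs A H (R C) (ch C))"
      using chs_shift[OF sg _ h(1)] h(2) by blast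
    then show ?thesis using chC C_def by simp
  qed
  have Ic: "I \<subseteq> cube n" unfolding I_def by blast
  have finI: "finite I" using finite_subset[OF Ic finite_cube] .
  have finX: "finite X" unfolding X_def using finI by simp
  have Xp: "\<forall>K\<in>X. is_subgroup n K \<and> (\<forall>x\<in>H-K. \<forall>y\<in>H-K. vadd x y \<in> K)"
  proof
    fix K assume "K \<in> X"
    then obtain g where g: "g \<in> I" "K = ker (coset H g)" unfolding X_def by blast
    have nt: "nontrivial_character H (ch (coset H g))" using key[OF g(1)] by blast
    show "is_subgroup n K \<and> (\<forall>x\<in>H-K. \<forall>y\<in>H-K. vadd x y \<in> K)"
      using kernel_props(1,3)[OF sg nt] g(2) unfolding ker_def by simp
  qed
  have il: "is_subgroup n H' \<and> card H \<le> 2 ^ card X * card H'"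
    unfolding H'_def by (rule inter_lemma[OF finX sg Xp])
  then have sg': "is_subgroup n H'" and cH: "card H \<le> 2 ^ card X * card H'" by auto
  have cX: "card X \<le> ncos n H"
  proof -
    have "X = ker ` (coset H ` I)" unfolding X_def by (simp add: image_image)
    then have "card X \<le> card (coset H ` I)" by (simp add: card_image_le finI)
    also have "\<dots> \<le> card (coset H ` cube n)" by (rule card_mono) (use Ic in auto)
    finally show ?thesis unfolding ncos_def .
  qed
  have pos': "card H' > 0" by (rule sub_card_pos[OF sg'])
  have "ncos n H' * card H' = ncos n H * card H"
    using card_cube_ncos[OF sg] card_cube_ncos[OF sg'] by simp
  also have "\<dots> \<le> ncos n H * (2 ^ card X * card H')" using cH by simp
  also have "\<dots> \<le> ncos n H * (2 ^ ncos n H * card H')"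
    using cX by (simp add: power_increasing)
  finally have "ncos n H' * card H' \<le> (ncos n H * 2 ^ ncos n H) * card H'" by (simp add: mult.assoc)
  then have ncos_b: "ncos n H' \<le> ncos n H * 2 ^ ncos n H" using pos' by simp
  have H'H: "H' \<subseteq> H" unfolding H'_def by blast
  define T where "T g = (\<Sum>x\<in>H. (dens A H' (vadd g x))\<^sup>2) / real (card H) - (dens A H g)\<^sup>2" for g
  have ediff: "energy n A H' - energy n A H = (\<Sum>g\<in>cube n. T g) / 2 ^ n"
    unfolding energy_def T_def energy_identity[OF sg, of A H'] sum_subtractf diff_divide_distrib ..
  have Tnn: "T g \<ge> 0" for g using var_nonneg[OF sg sg' H'H, of A g] unfolding T_def by simp
  have Tbig: "T g > \<epsilon>\<^sup>2" if "g \<in> I" for g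
  proof -
    have nt: "nontrivial_character H (ch (coset H g))" and big: "cmod (chs A H g (ch (coset H g))) > \<epsilon> * real (card H)"
      using key[OF that] by auto
    have "ker (coset H g) \<in> X" unfolding X_def using that by blast
    then have "H' \<subseteq> {x\<in>H. ch (coset H g) x = 1}" unfolding H'_def ker_def by blast
    then show ?thesis unfolding T_def using var_big[OF sg nt sg' _ big eps] by blast
  qed
  have "\<epsilon> * 2 ^ n > 0" using eps by simp
  then have "card I > 0" using Icard by linarith
  then have Ine: "I \<noteq> {}" by auto
  have "(\<Sum>g\<in>cube n. T g) \<ge> (\<Sum>g\<in>I. T g)"
    by (rule sum_mono2) (use Ic Tnn in auto)
  moreover have "(\<Sum>g\<in>I. T g) > (\<Sum>g\<in>I. \<epsilon>\<^sup>2)"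
    by (rule sum_strict_mono[OF finI Ine]) (use Tbig in auto)
  moreover have "(\<Sum>g\<in>I. \<epsilon>\<^sup>2) = real (card I) * \<epsilon>\<^sup>2" by simp
  moreover have "real (card I) * \<epsilon>\<^sup>2 > \<epsilon> * 2 ^ n * \<epsilon>\<^sup>2"
    using Icard eps by (simp add: mult_strict_right_mono)
  ultimately have "(\<Sum>g\<in>cube n. T g) > 2 ^ n * \<epsilon> ^ 3"
    by (simp add: power2_eq_square power3_eq_cube algebra_simps)
  then have "(\<Sum>g\<in>cube n. T g) / 2 ^ n > \<epsilon> ^ 3" by (simp add: field_simps)
  then have "energy n A H' > energy n A H + \<epsilon> ^ 3" using ediff by simp
  then show ?thesis using sg' ncos_b by blast
qed

lemma cube_subgroup: "is_subgroup n (cube n)"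
proof -
  have "vzero \<in> cube n" by (simp add: vzero_def cube_def)
  then show ?thesis unfolding is_subgroup_def using vadd_cube by blast
qed

lemma ncos_cube: "ncos n (cube n) = 1"
proof -
  have "card (cube n) = ncos n (cube n) * card (cube n)" by (rule card_cube_ncos[OF cube_subgroup])
  moreover have "card (cube n) > 0" by (simp add: card_cube)
  then have "cube n \<noteq> {}" by (metis card.empty less_irrefl)
  ultimately show ?thesis by simp
qed

lemma energy_nonneg: "energy n A H \<ge> 0"
proof -
  have "(\<Sum>g\<in>cube n. (dens A H g)\<^sup>2) \<ge> 0" by (rule sum_nonneg) simp
  then show ?thesis unfolding energy_def by simp
qed

lemma energy_le1:
  assumes sg: "is_subgroup n H"
  shows "energy n A H \<le> 1"
proof -
  have p: "real (card H) > 0" using sub_card_pos[OF sg] by simp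
  have d: "(dens A H g)\<^sup>2 \<le> 1" for g
  proof -
    have c0: "cnt A H g \<ge> 0" unfolding cnt_def by (rule sum_nonneg) simp
    have "cnt A H g \<le> (\<Sum>x\<in>H. 1)" unfolding cnt_def by (rule sum_mono) simp
    then have c1: "cnt A H g \<le> real (card H)" by simp
    have "dens A H g \<ge> 0" "dens A H g \<le> 1" unfolding dens_def using c0 c1 p by auto
    then show ?thesis by (simp add: power_le_one)
  qed
  have "(\<Sum>g\<in>cube n. (dens A H g)\<^sup>2) \<le> (\<Sum>g\<in>cube n. 1)" by (rule sum_mono) (use d in auto)
  also have "\<dots> = 2 ^ n" by (simp add: card_cube)
  finally show ?thesis unfolding energy_def by simp
qed

lemma two_mul_le_pow: "2 * c \<le> (2::nat) ^ c"
proof (induction c)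
  case 0 then show ?case by simp
next
  case (Suc c)
  show ?case
  proof (cases "c = 0")
    case True then show ?thesis by simp
  next
    case False
    then have "2 \<le> (2::nat) ^ c" by (metis One_nat_def Suc_leI neq0_conv one_less_numeral_iff power_increasing_iff semiring_norm(76) power_one_right)
    then show ?thesis using Suc.IH by simp
  qed
qed

lemma tower_mono_Suc: "tower k \<le> tower (Suc k)"
  by (simp add: less_imp_le)

lemma main_iter:
  assumes eps: "0 < \<epsilon>"
  shows "\<exists>H. is_subgroup n H \<and> 2 * ncos n H \<le> tower (Suc m)
           \<and> (eps_regular n \<epsilon> A H \<or> energy n A H \<ge> real m * \<epsilon> ^ 3)"
proof (induction m)
  case 0
  show ?case
    by (rule exI[of _ "cube n"]) (simp add: cube_subgroup ncos_cube energy_nonneg)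
next
  case (Suc m)
  then obtain H where H: "is_subgroup n H" "2 * ncos n H \<le> tower (Suc m)"
    "eps_regular n \<epsilon> A H \<or> energy n A H \<ge> real m * \<epsilon> ^ 3" by blast
  show ?case
  proof (cases "eps_regular n \<epsilon> A H")
    case True
    have "2 * ncos n H \<le> tower (Suc (Suc m))" using H(2) tower_mono_Suc[of "Suc m"] by linarith
    then show ?thesis using H(1) True by blast
  next
    case False
    then have E: "energy n A H \<ge> real m * \<epsilon> ^ 3" using H(3) by blast
    obtain H' where H': "is_subgroup n H'" "ncos n H' \<le> ncos n H * 2 ^ ncos n H"
      "energy n A H' > energy n A H + \<epsilon> ^ 3" using step[OF H(1) eps False] by blast
    define c where "c = ncos n H"
    have "2 * ncos n H' \<le> 2 * c * 2 ^ c" using H'(2) c_def by simp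
    also have "\<dots> \<le> 2 ^ c * 2 ^ c" using two_mul_le_pow[of c] by simp
    also have "\<dots> = 2 ^ (2 * c)" by (simp add: power_add[symmetric] mult_2)
    also have "\<dots> \<le> 2 ^ tower (Suc m)" using H(2) c_def by (simp add: power_increasing)
    also have "\<dots> = tower (Suc (Suc m))" by simp
    finally have b: "2 * ncos n H' \<le> tower (Suc (Suc m))" .
    have "energy n A H' \<ge> real (Suc m) * \<epsilon> ^ 3" using E H'(3) by (simp add: algebra_simps)
    then show ?thesis using b H'(1) by blast
  qed
qed

theorem theorem2p1:
  fixes n :: nat and \<epsilon> :: real and A :: "(nat \<Rightarrow> bool) set"
  assumes "0 < \<epsilon>" and "\<epsilon> < 1/2" and "A \<subseteq> cube n"
  shows "\<exists>H. is_subgroup n H \<and> sg_index n H \<le> real (W (1 / \<epsilon> ^ 3)) \<and> eps_regular n \<epsilon> A H"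
proof -
  have eps: "0 < \<epsilon>" using assms(1) .
  define t where "t = 1 / \<epsilon> ^ 3"
  have tpos: "t > 0" using eps t_def by simp
  define M where "M = nat \<lceil>t\<rceil> - 1"
  have ceil1: "\<lceil>t\<rceil> \<ge> 1" using tpos by simp
  have SM: "Suc M = nat \<lceil>t\<rceil>" using ceil1 M_def by linarith
  have "real (Suc M) = of_int \<lceil>t\<rceil>" using SM ceil1 by simp
  then have SMt: "real (Suc M) \<ge> t" by simp
  obtain H where H: "is_subgroup n H" "2 * ncos n H \<le> tower (Suc M)"
    "eps_regular n \<epsilon> A H \<or> energy n A H \<ge> real M * \<epsilon> ^ 3"
    using main_iter[OF eps, of n M A] by blast
  have reg: "eps_regular n \<epsilon> A H"
  proof (rule ccontr)
    assume nr: "\<not> eps_regular n \<epsilon> A H"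
    then have E: "energy n A H \<ge> real M * \<epsilon> ^ 3" using H(3) by blast
    obtain H' where H': "is_subgroup n H'" "energy n A H' > energy n A H + \<epsilon> ^ 3"
      using step[OF H(1) eps nr] by blast
    have "energy n A H' > real (Suc M) * \<epsilon> ^ 3" using E H'(2) by (simp add: algebra_simps)
    moreover have "real (Suc M) * \<epsilon> ^ 3 \<ge> t * \<epsilon> ^ 3"
      using SMt eps by (simp add: mult_right_mono)
    moreover have "t * \<epsilon> ^ 3 = 1" using eps t_def by simp
    ultimately show False using energy_le1[OF H'(1), of A] by linarith
  qed
  have idx: "sg_index n H = real (ncos n H)"
    unfolding sg_index_def using card_cube_ncos[OF H(1)] sub_card_pos[OF H(1)] by simp
  have "ncos n H \<le> tower (Suc M)" using H(2) by linarith
  then have "sg_index n H \<le> real (W t)" unfolding idx W_def SM[symmetric] by simp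
  then show ?thesis using H(1) reg t_def by blast
qed

end
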